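(* Let $L$ be a Latin array of order $n$, let $D$ be a diagonal of $L$ of weight $w$, and let $e$ be a cell of $D$. Then there is a diagonal of $L$ containing $e$, of weight at least $w$, on which each symbol appears at most twice.
   Context: A Latin array of order $n$ is an $n\times n$ matrix each of whose cells contains a symbol (from an arbitrary set of symbols), such that no symbol occurs more than once in any row or in any column. A diagonal of an $n\times n$ array is a selection of $n$ cells, one from each row and one from each column; its weight is the number of distinct symbols on it. *)

theory Defs
  imports Main "HOL-Combinatorics.Permutations"
begin

definition latin_array :: "nat \<Rightarrow> (nat \<Rightarrow> nat \<Rightarrow> 'a) \<Rightarrow> bool" where
  "latin_array n L \<longleftrightarrow>
     (\<forall>i<n. inj_on (\<lambda>j. L i j) {..<n}) \<and> (\<forall>j<n. inj_on (\<lambda>i. L i j) {..<n})"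

definition diagonal :: "nat \<Rightarrow> (nat \<Rightarrow> nat) \<Rightarrow> bool" where
  "diagonal n s \<longleftrightarrow> s permutes {..<n}"

definition diag_cells :: "nat \<Rightarrow> (nat \<Rightarrow> nat) \<Rightarrow> (nat \<times> nat) set" where
  "diag_cells n s = (\<lambda>i. (i, s i)) ` {..<n}"

definition weight :: "nat \<Rightarrow> (nat \<Rightarrow> nat \<Rightarrow> 'a) \<Rightarrow> (nat \<Rightarrow> nat) \<Rightarrow> nat" where
  "weight n L s = card ((\<lambda>i. L i (s i)) ` {..<n})"

definition occurrences :: "nat \<Rightarrow> (nat \<Rightarrow> nat \<Rightarrow> 'a) \<Rightarrow> (nat \<Rightarrow> nat) \<Rightarrow> 'a \<Rightarrow> nat" where
  "occurrences n L s x = card {i \<in> {..<n}. L i (s i) = x}"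

end

theory Submission
  imports Defs
begin

definition exc :: "nat \<Rightarrow> (nat \<Rightarrow> nat \<Rightarrow> 'a) \<Rightarrow> (nat \<Rightarrow> nat) \<Rightarrow> nat" where
  "exc n L t = (\<Sum>v \<in> (\<lambda>p. L (fst p) (snd p)) ` ({..<n} \<times> {..<n}). occurrences n L t v - 2)"

lemma sum_occ_inj:
  assumes inj: "inj_on g R" and fin: "finite R"
    and nx: "\<And>r. r \<in> R \<Longrightarrow> g r \<noteq> x"
  shows "(\<Sum>r\<in>R. occurrences n L t (g r)) \<le> n - occurrences n L t x"
proof -
  define A where "A v = {i\<in>{..<n}. L i (t i) = v}" for v
  have "(\<Sum>r\<in>R. occurrences n L t (g r)) = (\<Sum>v\<in>g ` R. card (A v))"
    using sum.reindex[OF inj, of "\<lambda>v. card (A v)"] by (simp add: occurrences_def A_def)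
  also have "\<dots> = card (\<Union>(A ` (g ` R)))"
    by (rule card_UN_disjoint[symmetric]) (auto simp: A_def fin)
  also have "\<dots> \<le> card ({..<n} - A x)"
    by (rule card_mono) (auto simp: A_def dest: nx)
  also have "\<dots> = n - card (A x)"
    by (subst card_Diff_subset) (auto simp: A_def)
  finally show ?thesis by (simp add: occurrences_def A_def)
qed

lemma step:
  assumes lat: "latin_array n L" and dg: "diagonal n t" and eC: "e \<in> diag_cells n t"
    and k3: "occurrences n L t x \<ge> 3"
  shows "\<exists>t'. diagonal n t' \<and> e \<in> diag_cells n t' \<and> weight n L t' \<ge> weight n L t
           \<and> exc n L t' < exc n L t"
proof -
  define oc where "oc v = occurrences n L t v" for v
  define A where "A v = {i\<in>{..<n}. L i (t i) = v}" for v
  have ocA: "oc v = card (A v)" for v by (simp add: oc_def A_def occurrences_def)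
  have finA: "finite (A v)" for v by (simp add: A_def)
  have perm: "t permutes {..<n}" using dg by (simp add: diagonal_def)
  have tin: "t i < n" if "i < n" for i using permutes_in_image[OF perm] that by simp
  have tinj: "inj t" using permutes_inj[OF perm] .
  have rowinj: "j = j'" if "i < n" "j < n" "j' < n" "L i j = L i j'" for i j j'
    using lat that unfolding latin_array_def inj_on_def by blast
  have colinj: "i = i'" if "j < n" "i < n" "i' < n" "L i j = L i' j" for i i' j
    using lat that unfolding latin_array_def inj_on_def by blast
  obtain i0 where i0: "i0 < n" "e = (i0, t i0)" using eC by (auto simp: diag_cells_def)
  have cAx: "card (A x) \<ge> 3" using k3 ocA oc_def by simp
  have Axn: "A x \<subseteq> {..<n}" by (auto simp: A_def)
  have ocxn: "oc x \<le> n" using card_mono[OF _ Axn] ocA by simp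
  obtain a where a: "a \<in> A x" "a \<noteq> i0"
  proof -
    have "\<not> A x \<subseteq> {i0}"
    proof
      assume "A x \<subseteq> {i0}"
      then have "card (A x) \<le> 1" using card_mono[of "{i0}" "A x"] by simp
      then show False using cAx by simp
    qed
    then show ?thesis using that by blast
  qed
  have an: "a < n" and ax: "L a (t a) = x" using a by (auto simp: A_def)
  define R where "R = {..<n} - {a, i0}"
  have cardR: "card R = n - 2" using an i0(1) a(2) by (simp add: R_def card_Diff_subset)
  have finR: "finite R" by (simp add: R_def)
  have s1: "(\<Sum>r\<in>R. oc (L a (t r))) \<le> n - oc x"
    unfolding oc_def
  proof (rule sum_occ_inj[OF _ finR])
    show "inj_on (\<lambda>r. L a (t r)) R"
    proof (rule inj_onI)
      fix p q assume "p \<in> R" "q \<in> R" "L a (t p) = L a (t q)"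
      then show "p = q" using rowinj[OF an tin[of p] tin[of q]] injD[OF tinj] by (auto simp: R_def)
    qed
    show "L a (t r) \<noteq> x" if "r \<in> R" for r
      using that rowinj[OF an tin[of r] tin[OF an]] ax injD[OF tinj, of r a] by (auto simp: R_def)
  qed
  have s2: "(\<Sum>r\<in>R. oc (L r (t a))) \<le> n - oc x"
    unfolding oc_def
  proof (rule sum_occ_inj[OF _ finR])
    show "inj_on (\<lambda>r. L r (t a)) R"
    proof (rule inj_onI)
      fix p q assume "p \<in> R" "q \<in> R" "L p (t a) = L q (t a)"
      then show "p = q" using colinj[OF tin[OF an], of p q] by (auto simp: R_def)
    qed
    show "L r (t a) \<noteq> x" if "r \<in> R" for r
      using that colinj[OF tin[OF an], of r a] an ax by (auto simp: R_def)
  qed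
  define f where "f r = oc (L a (t r)) + oc (L r (t a))" for r
  have "\<exists>r\<in>R. f r \<le> 1"
  proof (rule ccontr)
    assume "\<not> ?thesis"
    then have "\<forall>r\<in>R. 2 \<le> f r" by auto
    then have "(\<Sum>r\<in>R. (2::nat)) \<le> (\<Sum>r\<in>R. f r)" by (intro sum_mono) auto
    also have "\<dots> = (\<Sum>r\<in>R. oc (L a (t r))) + (\<Sum>r\<in>R. oc (L r (t a)))"
      by (simp add: f_def sum.distrib)
    finally have "2 * (n - 2) \<le> 2 * (n - oc x)" using s1 s2 cardR by simp
    then show False using k3 ocxn oc_def by simp
  qed
  then obtain r where rR: "r \<in> R" and fr: "f r \<le> 1" by blast
  have rn: "r < n" and ra: "r \<noteq> a" and ri0: "r \<noteq> i0" using rR by (auto simp: R_def)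
  define t' where "t' = t \<circ> transpose a r"
  have t'a: "t' a = t r" and t'r: "t' r = t a" by (auto simp: t'_def)
  have t'o: "t' i = t i" if "i \<noteq> a" "i \<noteq> r" for i using that by (auto simp: t'_def transpose_def)
  have dg': "diagonal n t'"
    unfolding diagonal_def t'_def
    by (rule permutes_compose[OF permutes_swap_id perm]) (use an rn in auto)
  have e': "e \<in> diag_cells n t'"
    using i0 a(2) ri0 t'o[of i0] by (auto simp: diag_cells_def)
  define y where "y = L a (t r)"
  define z where "z = L r (t a)"
  define u where "u = L r (t r)"
  define oc' where "oc' v = occurrences n L t' v" for v
  define A' where "A' v = {i\<in>{..<n}. L i (t' i) = v}" for v
  have ocA': "oc' v = card (A' v)" for v by (simp add: oc'_def A'_def occurrences_def)
  have xy: "x \<noteq> y"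
  proof
    assume "x = y"
    then have "L a (t r) = L a (t a)" by (simp add: y_def ax)
    then have "t r = t a" by (rule rowinj[OF an tin[OF rn] tin[OF an]])
    then have "r = a" by (rule injD[OF tinj])
    then show False using ra by simp
  qed
  have xz: "x \<noteq> z"
  proof
    assume "x = z"
    then have "L r (t a) = L a (t a)" by (simp add: z_def ax)
    then have "r = a" by (rule colinj[OF tin[OF an] rn an])
    then show False using ra by simp
  qed
  have sub: "A' v \<subseteq> (A v - {a, r}) \<union> (if y = v then {a} else {}) \<union> (if z = v then {r} else {})" for v
  proof
    fix i assume i: "i \<in> A' v"
    then have iv: "i < n" "L i (t' i) = v" by (auto simp: A'_def)
    show "i \<in> (A v - {a, r}) \<union> (if y = v then {a} else {}) \<union> (if z = v then {r} else {})"
    proof (cases "i = a")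
      case True then show ?thesis using iv t'a by (simp add: y_def)
    next
      case False
      show ?thesis
      proof (cases "i = r")
        case True then show ?thesis using iv t'r by (simp add: z_def)
      next
        case False2: False
        then show ?thesis using iv t'o[OF False False2] False by (simp add: A_def)
      qed
    qed
  qed
  have card': "oc' v \<le> oc v + (if y = v then 1 else 0) + (if z = v then 1 else 0)" for v
  proof -
    have "oc' v \<le> card ((A v - {a, r}) \<union> (if y = v then {a} else {}) \<union> (if z = v then {r} else {}))"
      unfolding ocA' by (rule card_mono[OF _ sub]) (simp add: finA)
    also have "\<dots> \<le> card (A v - {a, r}) + card (if y = v then {a} else ({}::nat set)) + card (if z = v then {r} else ({}::nat set))"
      by (rule order_trans[OF card_Un_le add_right_mono[OF card_Un_le]])
    also have "\<dots> \<le> oc v + (if y = v then 1 else 0) + (if z = v then 1 else 0)"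
      using card_mono[OF finA, of "A v - {a,r}" v] ocA by auto
    finally show ?thesis .
  qed
  have ocy: "oc' y \<le> 2"
  proof (cases "z = y")
    case True
    then have "oc y = 0" using fr by (simp add: f_def y_def z_def)
    then show ?thesis using card'[of y] True by simp
  next
    case False
    then have "oc y \<le> 1" using fr by (simp add: f_def y_def z_def)
    then show ?thesis using card'[of y] False by simp
  qed
  have ocz: "oc' z \<le> 2"
  proof (cases "z = y")
    case True
    then have "oc y = 0" using fr by (simp add: f_def y_def z_def)
    then show ?thesis using card'[of y] True by simp
  next
    case False
    then have "oc z \<le> 1" using fr by (simp add: f_def y_def z_def)
    then show ?thesis using card'[of z] False by simp
  qed
  have other: "oc' v \<le> oc v" if "v \<noteq> y" "v \<noteq> z" for v
    using card'[of v] that by auto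
  have ocx: "oc' x < oc x"
  proof -
    have "A' x \<subseteq> A x - {a, r}" using sub[of x] xy xz by auto
    also have "\<dots> \<subset> A x" using a(1) by auto
    finally show ?thesis unfolding ocA' ocA by (rule psubset_card_mono[OF finA])
  qed
  define U where "U = (\<lambda>p. L (fst p) (snd p)) ` ({..<n} \<times> {..<n})"
  have xU: "x \<in> U" unfolding U_def using an tin[OF an] ax by force
  have "exc n L t' < exc n L t"
    unfolding exc_def U_def[symmetric] oc_def[symmetric] oc'_def[symmetric]
  proof (rule sum_strict_mono_ex1)
    show "finite U" by (simp add: U_def)
    show "\<forall>v\<in>U. oc' v - 2 \<le> oc v - 2"
    proof
      fix v assume "v \<in> U"
      show "oc' v - 2 \<le> oc v - 2"
      proof (cases "v = y \<or> v = z")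
        case True then show ?thesis using ocy ocz by auto
      next
        case False then show ?thesis using other[of v] by (simp add: diff_le_mono)
      qed
    qed
    show "\<exists>v\<in>U. oc' v - 2 < oc v - 2"
      using xU ocx k3 oc_def by (intro bexI[of _ x]) auto
  qed
  moreover have "weight n L t' \<ge> weight n L t"
  proof -
    define Sy where "Sy = (\<lambda>i. L i (t i)) ` {..<n}"
    define Sy' where "Sy' = (\<lambda>i. L i (t' i)) ` {..<n}"
    have uS: "u \<in> Sy" using rn by (auto simp: Sy_def u_def)
    have notA: "\<not> A x \<subseteq> {a, r}"
    proof
      assume "A x \<subseteq> {a, r}"
      then have "card (A x) \<le> 2" using card_mono[of "{a,r}" "A x"] ra by simp
      then show False using cAx by simp
    qed
    then obtain j where j: "j \<in> A x" "j \<noteq> a" "j \<noteq> r" by blast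
    have xS': "x \<in> Sy'" using j t'o[of j] by (force simp: A_def Sy'_def)
    have sub1: "Sy - {u} \<subseteq> Sy'"
    proof
      fix v assume "v \<in> Sy - {u}"
      then obtain i where i: "i < n" "v = L i (t i)" "v \<noteq> u" by (auto simp: Sy_def)
      show "v \<in> Sy'"
      proof (cases "i = a")
        case True then show ?thesis using xS' ax i by simp
      next
        case False
        then have "i \<noteq> r" using i u_def by auto
        then have "L i (t' i) = v" using False t'o[of i] i by simp
        then show ?thesis using i(1) unfolding Sy'_def by (metis image_eqI lessThan_iff)
      qed
    qed
    have notin: "v \<notin> Sy" if "oc v = 0" for v
      using that ocA[of v] finA[of v] by (auto simp: Sy_def A_def)
    obtain nw where nw: "nw \<notin> Sy" "nw \<in> Sy'"
    proof (cases "oc y = 0")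
      case True
      have "y \<in> Sy'" unfolding Sy'_def y_def using an t'a by (metis image_eqI lessThan_iff)
      then show ?thesis using that[of y] notin True by blast
    next
      case False
      then have "oc z = 0" using fr by (simp add: f_def y_def z_def)
      moreover have "z \<in> Sy'" unfolding Sy'_def z_def using rn t'r by (metis image_eqI lessThan_iff)
      ultimately show ?thesis using that[of z] notin by (simp add: z_def)
    qed
    have finS': "finite Sy'" by (simp add: Sy'_def)
    have finS: "finite Sy" by (simp add: Sy_def)
    have cp: "card Sy > 0" using uS finS card_gt_0_iff by blast
    have "card (insert nw (Sy - {u})) = Suc (card (Sy - {u}))"
      using nw(1) finS by simp
    also have "\<dots> = card Sy" using card_Diff_singleton[OF uS] cp by simp
    finally have "card Sy = card (insert nw (Sy - {u}))" by simp
    also have "\<dots> \<le> card Sy'" using sub1 nw(2) by (intro card_mono[OF finS']) auto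
    finally show ?thesis by (simp add: weight_def Sy_def Sy'_def)
  qed
  ultimately show ?thesis using dg' e' by blast
qed

lemma main_ind:
  assumes lat: "latin_array n L"
  shows "diagonal n t \<Longrightarrow> e \<in> diag_cells n t \<Longrightarrow>
    \<exists>t'. diagonal n t' \<and> e \<in> diag_cells n t' \<and> weight n L t' \<ge> weight n L t
             \<and> (\<forall>x. occurrences n L t' x \<le> 2)"
proof (induction "exc n L t" arbitrary: t rule: less_induct)
  case less
  show ?case
  proof (cases "\<forall>x. occurrences n L t x \<le> 2")
    case True
    then show ?thesis using less.prems by blast
  next
    case False
    then obtain x where "\<not> occurrences n L t x \<le> 2" by blast
    then have "occurrences n L t x \<ge> 3" by simp
    from step[OF lat less.prems(1) less.prems(2) this] obtain t1 where
      t1: "diagonal n t1" "e \<in> diag_cells n t1" "weight n L t1 \<ge> weight n L t" "exc n L t1 < exc n L t"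
      by blast
    from less.hyps[OF t1(4) t1(1) t1(2)] obtain t' where
      "diagonal n t'" "e \<in> diag_cells n t'" "weight n L t' \<ge> weight n L t1"
      "\<forall>x. occurrences n L t' x \<le> 2" by blast
    then show ?thesis using t1(3) by (meson order_trans)
  qed
qed

theorem lemma2p3:
  fixes L :: "nat \<Rightarrow> nat \<Rightarrow> 'a" and n :: nat and s :: "nat \<Rightarrow> nat" and e :: "nat \<times> nat"
  assumes "latin_array n L"
    and "diagonal n s"
    and "e \<in> diag_cells n s"
  shows "\<exists>t. diagonal n t \<and> e \<in> diag_cells n t \<and> weight n L t \<ge> weight n L s
             \<and> (\<forall>x. occurrences n L t x \<le> 2)"
  using main_ind[OF assms(1) assms(2) assms(3)] by blast

end
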